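(* Let $\alpha\in[0,1)$, let $q_\alpha\in\mathcal{P}\big((1+\alpha)/2\big)$, and let $g:[0,1)\to\mathbb{R}$ be continuously differentiable with $g(0)=0$ and $g'(0)\neq0$. Then for every $\epsilon>0$ there exists $\delta>0$ such that for every $r\in(1-\delta,1)$, $$r\int_0^r (g'(x))^2\,dx \;\ge\; r\int_0^r q_\alpha(x)\,g^2(x)\,dx+\left(\frac{1+\alpha}{2}-\epsilon\right)g^2(r).$$
   Context: For $\gamma\ge 0$, $\mathcal{P}(\gamma)$ is the class of continuous functions $q:[0,1)\to\mathbb{R}$ such that (a) $q(r)\ge0$ for all $r\in[0,1)$, and (b) the solution $y$ of $y''+qy=0$, $y(0)=0$, $y'(0)=1$, is positive on $(0,1)$ and satisfies $\lim_{x\to1^-} \frac{y'(x)}{y(x)}\ge\gamma$. *)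

theory Defs
  imports "HOL-Analysis.Analysis" "HOL-Library.Extended_Real"
begin

definition ivp_solution :: "(real \<Rightarrow> real) \<Rightarrow> (real \<Rightarrow> real) \<Rightarrow> (real \<Rightarrow> real) \<Rightarrow> bool" where
  "ivp_solution q y yd \<longleftrightarrow>
     (\<forall>x\<in>{0..<1}. (y has_real_derivative yd x) (at x within {0..<1})) \<and>
     (\<forall>x\<in>{0..<1}. (yd has_real_derivative (- q x * y x)) (at x within {0..<1})) \<and>
     y 0 = 0 \<and> yd 0 = 1"

text \<open>The class P(gamma). The limit of y'/y at 1 from the left is taken in the
extended reals (it may be infinite) and must be at least gamma.\<close>
definition classP :: "real \<Rightarrow> (real \<Rightarrow> real) \<Rightarrow> bool" where
  "classP \<gamma> q \<longleftrightarrow>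
     continuous_on {0..<1} q \<and> (\<forall>r\<in>{0..<1}. q r \<ge> 0) \<and>
     (\<exists>y yd. ivp_solution q y yd \<and> (\<forall>x\<in>{0<..<1}. y x > 0) \<and>
        (\<exists>L::ereal. ((\<lambda>x. ereal (yd x / y x)) \<longlongrightarrow> L) (at_left 1) \<and> L \<ge> ereal \<gamma>))"

end

theory Submission
  imports Defs
begin

lemma at_right_eq01: "at_right (0::real) = at 0 within {0..<1}"
  by (rule at_within_nhd[where S="{-1<..<1}"]) auto

lemma picone:
  fixes y yd q g g' :: "real \<Rightarrow> real"
  assumes y_d: "\<forall>x\<in>{0..<1}. (y has_real_derivative yd x) (at x within {0..<1})"
  and yd_d: "\<forall>x\<in>{0..<1}. (yd has_real_derivative (- q x * y x)) (at x within {0..<1})"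
  and y0: "y 0 = 0" and yd0: "yd 0 = 1"
  and ypos: "\<forall>x\<in>{0<..<1}. y x > 0"
  and qc: "continuous_on {0..<1} q"
  and gd: "\<forall>x\<in>{0..<1}. (g has_real_derivative g' x) (at x within {0..<1})"
  and g'c: "continuous_on {0..<1} g'" and g0: "g 0 = 0"
  and r: "0 < r" "r < 1"
  shows "(g r)^2 * yd r / y r \<le> integral {0..r} (\<lambda>x. (g' x)^2 - q x * (g x)^2)"
proof -
  define f where "f = (\<lambda>x. (g' x)^2 - q x * (g x)^2)"
  define G where "G = (\<lambda>x. (g x)^2 * yd x / y x)"
  define D where "D = (\<lambda>x. (2 * g x * g' x * yd x + (g x)^2 * (- q x * y x)) / y x
      - (g x)^2 * yd x * yd x / (y x)^2)"
  have gc: "continuous_on {0..<1} g"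
    using gd by (meson DERIV_continuous continuous_on_eq_continuous_within)
  have fc: "continuous_on {0..r} f"
    unfolding f_def using r
    by (intro continuous_intros continuous_on_subset[OF qc] continuous_on_subset[OF gc]
        continuous_on_subset[OF g'c]) auto
  have fint: "f integrable_on {0..r}"
    using fc integrable_continuous_real by blast
  have key: "G r - G s \<le> integral {0..r} f - integral {0..s} f" if s: "0 < s" "s < r" for s
  proof -
    have "\<forall>x\<in>{s..r}. (G has_vector_derivative D x) (at x within {s..r})"
    proof
      fix x assume x: "x \<in> {s..r}"
      have sub: "{s..r} \<subseteq> {0..<1}" using s r by auto
      have x01: "x \<in> {0..<1}" using x sub by auto
      have yx: "y x > 0" using ypos x s r by auto
      have d1: "(y has_real_derivative yd x) (at x within {s..r})"
        using y_d x01 sub DERIV_subset by blast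
      have d2: "(yd has_real_derivative (- q x * y x)) (at x within {s..r})"
        using yd_d x01 sub DERIV_subset by blast
      have d3: "(g has_real_derivative g' x) (at x within {s..r})"
        using gd x01 sub DERIV_subset by blast
      have "(G has_real_derivative D x) (at x within {s..r})"
        unfolding G_def
        by (rule DERIV_cong[OF DERIV_divide[OF DERIV_mult[OF DERIV_power[OF d3, of 2] d2] d1]])
          (use yx in \<open>simp_all add: D_def field_simps power2_eq_square\<close>)
      then show "(G has_vector_derivative D x) (at x within {s..r})"
        by (simp add: has_real_derivative_iff_has_vector_derivative)
    qed
    then have hD: "(D has_integral (G r - G s)) {s..r}"
      using s by (intro fundamental_theorem_of_calculus) auto
    have fint2: "f integrable_on {s..r}"
      using fint integrable_on_subinterval s by fastforce
    have "G r - G s \<le> integral {s..r} f"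
    proof (rule has_integral_le[OF hD integrable_integral[OF fint2]])
      fix x assume x: "x \<in> {s..r}"
      have yx: "y x > 0" using ypos x s r by auto
      have "f x - D x = (g' x - g x * yd x / y x)^2"
        unfolding f_def D_def using yx by (simp add: field_simps power2_eq_square)
      then show "D x \<le> f x" by (smt (verit) zero_le_power2)
    qed
    also have "integral {s..r} f = integral {0..r} f - integral {0..s} f"
      using Henstock_Kurzweil_Integration.integral_combine[OF _ _ fint, of s] s by simp
    finally show ?thesis .
  qed
  have lim1: "((\<lambda>s. integral {0..s} f) \<longlongrightarrow> 0) (at_right 0)"
  proof -
    have "continuous_on {0..r} (\<lambda>x. integral {0..x} f)"
      using indefinite_integral_continuous_1[OF fint] .
    then have "((\<lambda>s. integral {0..s} f) \<longlongrightarrow> integral {0..0} f) (at 0 within {0..r})"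
      using r unfolding continuous_on_def by (meson atLeastAtMost_iff less_eq_real_def order_refl)
    then have "((\<lambda>s. integral {0..s} f) \<longlongrightarrow> 0) (at 0 within {0..r})" by simp
    moreover have "at_right (0::real) = at 0 within {0..r}"
      using r by (intro at_within_nhd[where S="{-1<..<r}"]) auto
    ultimately show ?thesis by simp
  qed
  have lim2: "(G \<longlongrightarrow> 0) (at_right 0)"
  proof -
    have "((\<lambda>s. (g s - g 0) / (s - 0)) \<longlongrightarrow> g' 0) (at 0 within {0..<1})"
      using gd has_field_derivative_iff by fastforce
    then have a: "((\<lambda>s. g s / s) \<longlongrightarrow> g' 0) (at_right 0)"
      using g0 by (simp add: at_right_eq01)
    have "((\<lambda>s. (y s - y 0) / (s - 0)) \<longlongrightarrow> yd 0) (at 0 within {0..<1})"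
      using y_d has_field_derivative_iff by fastforce
    then have b: "((\<lambda>s. y s / s) \<longlongrightarrow> 1) (at_right 0)"
      using y0 yd0 by (simp add: at_right_eq01)
    have "continuous (at 0 within {0..<1}) yd"
      using yd_d by (meson DERIV_continuous atLeastLessThan_iff less_numeral_extra(1) order_refl)
    then have c: "(yd \<longlongrightarrow> 1) (at_right 0)"
      using yd0 by (simp add: at_right_eq01 continuous_within)
    have d: "((\<lambda>s::real. s) \<longlongrightarrow> 0) (at_right 0)"
      by (simp add: tendsto_ident_at)
    have "((\<lambda>s. (g s / s)^2 * yd s * s / (y s / s)) \<longlongrightarrow> (g' 0)^2 * 1 * 0 / 1) (at_right 0)"
      by (intro tendsto_intros a b c d) auto
    then have e: "((\<lambda>s. (g s / s)^2 * yd s * s / (y s / s)) \<longlongrightarrow> 0) (at_right 0)" by simp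
    show ?thesis
    proof (rule Lim_transform_eventually[OF e])
      show "\<forall>\<^sub>F s in at_right 0. (g s / s)\<^sup>2 * yd s * s / (y s / s) = G s"
        using eventually_at_right_less[of "0::real"]
        by eventually_elim (simp add: G_def field_simps power2_eq_square)
    qed
  qed
  have lim3: "((\<lambda>s. G r - G s) \<longlongrightarrow> G r - 0) (at_right 0)"
    by (intro tendsto_intros lim2)
  have lim4: "((\<lambda>s. integral {0..r} f - integral {0..s} f) \<longlongrightarrow> integral {0..r} f - 0) (at_right 0)"
    by (intro tendsto_intros lim1)
  have ev: "\<forall>\<^sub>F s in at_right 0. G r - G s \<le> integral {0..r} f - integral {0..s} f"
    using eventually_at_right[of 0 r] r key by auto
  have "G r - 0 \<le> integral {0..r} f - 0"
    by (rule tendsto_le[OF _ lim4 lim3 ev]) simp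
  then show ?thesis unfolding G_def f_def by simp
qed

theorem lemma3p2:
  fixes \<alpha> :: real and q g g' :: "real \<Rightarrow> real"
  assumes "0 \<le> \<alpha>" "\<alpha> < 1"
    and "classP ((1 + \<alpha>) / 2) q"
    and "\<forall>x\<in>{0..<1}. (g has_real_derivative g' x) (at x within {0..<1})"
    and "continuous_on {0..<1} g'"
    and "g 0 = 0" "g' 0 \<noteq> 0"
  shows "\<forall>\<epsilon>>0. \<exists>\<delta>>0. \<forall>r. 1 - \<delta> < r \<and> r < 1 \<longrightarrow>
           r * integral {0..r} (\<lambda>x. (g' x)\<^sup>2)
             \<ge> r * integral {0..r} (\<lambda>x. q x * (g x)\<^sup>2) + ((1 + \<alpha>) / 2 - \<epsilon>) * (g r)\<^sup>2"
proof (intro allI impI)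
  fix \<epsilon> :: real assume \<epsilon>: "\<epsilon> > 0"
  define \<gamma> where "\<gamma> = (1 + \<alpha>) / 2"
  have \<gamma>: "1/2 \<le> \<gamma>" "\<gamma> < 1" using assms(1,2) by (auto simp: \<gamma>_def)
  have qc: "continuous_on {0..<1} q"
    using assms(3) unfolding classP_def by blast
  from assms(3) obtain y yd L where ivp: "ivp_solution q y yd"
    and ypos: "\<forall>x\<in>{0<..<1}. y x > 0"
    and lim: "((\<lambda>x. ereal (yd x / y x)) \<longlongrightarrow> L) (at_left 1)" and L: "L \<ge> ereal \<gamma>"
    unfolding classP_def \<gamma>_def by blast
  have "ereal (\<gamma> - \<epsilon>/2) < L" proof -
    have "ereal (\<gamma> - \<epsilon>/2) < ereal \<gamma>" using \<epsilon> by simp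
    then show ?thesis using L by (rule order_less_le_trans)
  qed
  then have "\<forall>\<^sub>F x in at_left 1. ereal (\<gamma> - \<epsilon>/2) < ereal (yd x / y x)"
    using order_tendstoD(1)[OF lim] by blast
  then have "\<forall>\<^sub>F x in at_left 1. \<gamma> - \<epsilon>/2 < yd x / y x" by simp
  then obtain b where b: "b < 1" "\<forall>x>b. x < 1 \<longrightarrow> \<gamma> - \<epsilon>/2 < yd x / y x"
    using eventually_at_left[of 0 "1::real"] by auto
  define \<delta> where "\<delta> = min (1 - b) (min (\<epsilon>/2) (1/2))"
  show "\<exists>\<delta>>0. \<forall>r. 1 - \<delta> < r \<and> r < 1 \<longrightarrow>
           r * integral {0..r} (\<lambda>x. (g' x)\<^sup>2)
             \<ge> r * integral {0..r} (\<lambda>x. q x * (g x)\<^sup>2) + ((1 + \<alpha>) / 2 - \<epsilon>) * (g r)\<^sup>2"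
  proof (intro exI[of _ \<delta>] conjI allI impI)
    show "\<delta> > 0" using b \<epsilon> by (simp add: \<delta>_def)
    fix r assume r: "1 - \<delta> < r \<and> r < 1"
    have r0: "0 < r" "r < 1" "b < r" "1 - r < \<epsilon>/2" using r by (auto simp: \<delta>_def)
    have P: "(g r)^2 * yd r / y r \<le> integral {0..r} (\<lambda>x. (g' x)^2 - q x * (g x)^2)"
      using ivp ypos qc assms(4,5,6) r0(1,2) unfolding ivp_solution_def
      by (intro picone[of y yd q g g' r]) auto
    have gc: "continuous_on {0..<1} g"
      using assms(4) by (meson DERIV_continuous continuous_on_eq_continuous_within)
    have i1: "(\<lambda>x. (g' x)^2) integrable_on {0..r}"
      using r0 by (intro integrable_continuous_real continuous_intros continuous_on_subset[OF assms(5)]) auto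
    have i2: "(\<lambda>x. q x * (g x)^2) integrable_on {0..r}"
      using r0 by (intro integrable_continuous_real continuous_intros
          continuous_on_subset[OF qc] continuous_on_subset[OF gc]) auto
    have split: "integral {0..r} (\<lambda>x. (g' x)^2 - q x * (g x)^2)
        = integral {0..r} (\<lambda>x. (g' x)^2) - integral {0..r} (\<lambda>x. q x * (g x)^2)"
      using integral_diff[OF i1 i2] by simp
    define w where "w = yd r / y r"
    have w: "\<gamma> - \<epsilon>/2 < w" using b r0 by (simp add: w_def)
    have rw: "\<gamma> - \<epsilon> \<le> r * w"
    proof (cases "\<gamma> - \<epsilon>/2 \<ge> 0")
      case True
      define c where "c = \<gamma> - \<epsilon>/2"
      have c1: "r * c \<le> r * w" using w r0 by (simp add: c_def)
      have c2: "(1 - r) * c \<le> (1 - r) * 1" using True \<gamma> r0 \<epsilon>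
        by (intro mult_left_mono) (auto simp: c_def)
      have c3: "c - (1 - r) \<le> r * c" using c2 by (simp add: algebra_simps)
      have "r * w \<ge> c - (1 - r)" using c3 c1 by (rule order_trans)
      then show ?thesis using r0 by (simp add: c_def)
    next
      case False
      show ?thesis
      proof (cases "w \<ge> 0")
        case True
        have "0 \<le> r * w" using True r0 by simp
        then show ?thesis using False \<epsilon> by linarith
      next
        case F2: False
        have "(1 - r) * w \<le> 0" using F2 r0 by (intro mult_nonneg_nonpos) auto
        then have "w \<le> r * w" by (simp add: algebra_simps)
        then show ?thesis using w \<epsilon> by simp
      qed
    qed
    have "(\<gamma> - \<epsilon>) * (g r)^2 \<le> r * w * (g r)^2"
      using rw by (intro mult_right_mono) auto
    also have "\<dots> = r * ((g r)^2 * yd r / y r)" by (simp add: w_def)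
    also have "\<dots> \<le> r * integral {0..r} (\<lambda>x. (g' x)^2 - q x * (g x)^2)"
      using P r0 by (intro mult_left_mono) auto
    finally show "r * integral {0..r} (\<lambda>x. (g' x)\<^sup>2)
             \<ge> r * integral {0..r} (\<lambda>x. q x * (g x)\<^sup>2) + ((1 + \<alpha>) / 2 - \<epsilon>) * (g r)\<^sup>2"
      unfolding split \<gamma>_def by (simp add: algebra_simps)
  qed
qed

end
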